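(* Let $n\ge2$. For $Q\in SU_n$ let $m(Q):=\min\{\|X\|_\phi^2: X\in\mathfrak{su}_n,\ \exp(X)=Q\}$ and let $\delta_n:=\max\{m(Q):Q\in SU_n\}$. Then $\delta_n=n\pi^2$ if $n$ is even and $\delta_n=(n-\frac1n)\pi^2$ if $n$ is odd. Moreover, a matrix $Q\in SU_n$ satisfies $m(Q)=\delta_n$ if and only if $Q=-I_n$ when $n$ is even, and if and only if $Q=e^{\frac{(n-1)\pi\mathbf{i}}{n}}I_n$ or $Q=e^{-\frac{(n-1)\pi\mathbf{i}}{n}}I_n$ when $n$ is odd.
   Context: $SU_n$ is the special unitary group, $\mathfrak{su}_n$ its Lie algebra of traceless skew-Hermitian matrices, $\exp$ the matrix exponential, and $\|X\|_\phi=\sqrt{\mathrm{tr}(XX^* )}$ the Frobenius norm. (The minimum defining $m(Q)$ exists, and $m(Q)$ equals the square of the Frobenius-metric distance from $I_n$ to $Q$ in $SU_n$.) *)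

theory Defs
  imports "HOL-Analysis.Analysis"
begin

text \<open>Complex n x n matrices are rendered as complex^'n^'n (n = CARD('n)).
  The norm on this type is the Euclidean norm of all entries, i.e. the Frobenius norm.\<close>

primrec cmatpow :: "complex^'n^'n \<Rightarrow> nat \<Rightarrow> complex^'n^'n" where
  "cmatpow A 0 = mat 1"
| "cmatpow A (Suc k) = cmatpow A k ** A"

definition cmat_exp :: "complex^'n^'n \<Rightarrow> complex^'n^'n" where
  "cmat_exp X = (\<Sum>k. (1 / fact k) *\<^sub>R cmatpow X k)"

definition conj_transpose :: "complex^'n^'n \<Rightarrow> complex^'n^'n" where
  "conj_transpose A = (\<chi> i j. cnj (A $ j $ i))"

definition frob_norm :: "complex^'n^'n \<Rightarrow> real" where
  "frob_norm X = sqrt (cmod (trace (X ** conj_transpose X)))"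

definition SU :: "(complex^'n^'n) set" where
  "SU = {Q. Q ** conj_transpose Q = mat 1 \<and> det Q = 1}"

definition su :: "(complex^'n^'n) set" where
  "su = {X. conj_transpose X = - X \<and> trace X = 0}"

definition m_SU :: "complex^'n^'n \<Rightarrow> real" where
  "m_SU Q = Inf {(frob_norm X)^2 | X. X \<in> su \<and> cmat_exp X = Q}"

definition delta_SU :: "'n::finite itself \<Rightarrow> real" where
  "delta_SU _ = Sup {m_SU Q | Q :: complex^'n^'n. Q \<in> SU}"

end

theory Submission
  imports Defs "HOL-Library.FuncSet"
begin


lemma ct_nth[simp]: "conj_transpose A $ i $ j = cnj (A $ j $ i)"
  by (simp add: conj_transpose_def)

lemma ct_ct[simp]: "conj_transpose (conj_transpose A) = A"
  by (simp add: vec_eq_iff)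

lemma ct_mult: "conj_transpose (A ** B) = conj_transpose B ** conj_transpose A"
  by (simp add: vec_eq_iff matrix_matrix_mult_def mult.commute)

lemma ct_mat[simp]: "conj_transpose (mat k) = mat (cnj k)"
  by (simp add: vec_eq_iff mat_def)

lemma ct_add: "conj_transpose (A + B) = conj_transpose A + conj_transpose B"
  by (simp add: vec_eq_iff)

lemma ct_diff: "conj_transpose (A - B) = conj_transpose A - conj_transpose B"
  by (simp add: vec_eq_iff)

lemma ct_uminus: "conj_transpose (- A) = - conj_transpose A"
  by (simp add: vec_eq_iff)

definition Dg :: "('n::finite \<Rightarrow> complex) \<Rightarrow> complex^'n^'n" where
  "Dg d = (\<chi> i j. if i = j then d i else 0)"

lemma Dg_nth[simp]: "Dg d $ i $ j = (if i = j then d i else 0)"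
  by (simp add: Dg_def)

lemma sum_if_left: "(\<Sum>k\<in>(UNIV::'n::finite set). (if i = k then a else 0) * f k) = (a::complex) * f i"
proof -
  have "(\<Sum>k\<in>(UNIV::'n set). (if i = k then a else 0) * f k) = (\<Sum>k\<in>UNIV. if k = i then a * f k else 0)"
    by (rule sum.cong) auto
  then show ?thesis by simp
qed

lemma sum_if_right: "(\<Sum>k\<in>(UNIV::'n::finite set). f k * (if k = j then a else 0)) = f j * (a::complex)"
proof -
  have "(\<Sum>k\<in>(UNIV::'n set). f k * (if k = j then a else 0)) = (\<Sum>k\<in>UNIV. if k = j then f k * a else 0)"
    by (rule sum.cong) auto
  then show ?thesis by simp
qed

lemma Dg_mult: "Dg d ** Dg e = Dg (\<lambda>i. d i * e i)"
  unfolding vec_eq_iff matrix_matrix_mult_def Dg_nth vec_lambda_beta sum_if_left by auto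

lemma ct_Dg: "conj_transpose (Dg d) = Dg (\<lambda>i. cnj (d i))"
  by (simp add: vec_eq_iff)

lemma trace_Dg: "trace (Dg d) = (\<Sum>i\<in>UNIV. d i)"
  by (simp add: trace_def)

lemma det_Dg: "det (Dg d) = (\<Prod>i\<in>UNIV. d i)"
  by (subst det_diagonal) auto

lemma Dg_const: "Dg (\<lambda>_. k) = mat k"
  by (simp add: vec_eq_iff mat_def)

lemma mat_mult_left: "mat k ** (A::complex^'m^'n) = (\<chi> i j. k * A $ i $ j)"
  unfolding vec_eq_iff matrix_matrix_mult_def mat_def vec_lambda_beta sum_if_left by auto

lemma mat_mult_right: "(A::complex^'n^'m) ** mat k = (\<chi> i j. A $ i $ j * k)"
  unfolding vec_eq_iff matrix_matrix_mult_def mat_def vec_lambda_beta sum_if_right by auto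

lemma mat_comm: "mat k ** (A::complex^'n^'n) = A ** mat k"
  by (simp add: mat_mult_left mat_mult_right mult.commute)

lemma matrix_add_rdistrib': "((B + C) ** A) = (B ** A) + (C ** A)"
  by (vector matrix_matrix_mult_def sum.distrib[symmetric] field_simps)

lemma cmatpow_Dg: "cmatpow (Dg d) k = Dg (\<lambda>i. d i ^ k)"
  by (induction k) (simp_all add: Dg_const Dg_mult mult.commute)

lemma cmatpow_conj:
  assumes "conj_transpose U ** U = mat 1" "U ** conj_transpose U = mat 1"
  shows "cmatpow (U ** M ** conj_transpose U) k = U ** cmatpow M k ** conj_transpose U"
proof (induction k)
  case 0 then show ?case using assms by simp
next
  case (Suc k)
  have "cmatpow (U ** M ** conj_transpose U) (Suc k)
     = U ** cmatpow M k ** (conj_transpose U ** U) ** M ** conj_transpose U"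
    using Suc by (simp add: matrix_mul_assoc)
  also have "\<dots> = U ** cmatpow M (Suc k) ** conj_transpose U"
    using assms by (simp add: matrix_mul_assoc)
  finally show ?case .
qed

lemma sums_Dg:
  assumes "\<And>i. (\<lambda>k. f k i) sums L i"
  shows "(\<lambda>k. Dg (f k)) sums Dg L"
proof -
  have "(\<lambda>N. \<Sum>k<N. Dg (f k)) = (\<lambda>N. Dg (\<lambda>i. \<Sum>k<N. f k i))"
    by (auto simp: vec_eq_iff)
  moreover have "(\<lambda>N. Dg (\<lambda>i. \<Sum>k<N. f k i)) \<longlonglongrightarrow> Dg L"
    unfolding Dg_def
    by (intro tendsto_vec_lambda) (use assms in \<open>auto simp: sums_def\<close>)
  ultimately show ?thesis by (simp add: sums_def)
qed

lemma linear_conjmap: "linear (\<lambda>M::complex^'n^'n. U ** M ** V)"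
  by (intro linearI)
     (simp_all add: matrix_add_ldistrib matrix_add_rdistrib' matrix_scalar_ac scalar_matrix_assoc)

lemma bounded_linear_conjmap: "bounded_linear (\<lambda>M::complex^'n^'n. U ** M ** V)"
  using linear_conjmap linear_conv_bounded_linear by blast

lemma cmat_exp_conj_Dg:
  assumes "conj_transpose U ** U = mat 1" "U ** conj_transpose U = mat 1"
  shows "cmat_exp (U ** Dg d ** conj_transpose U) = U ** Dg (\<lambda>i. exp (d i)) ** conj_transpose U"
proof -
  have s1: "(\<lambda>k. Dg (\<lambda>i. d i ^ k /\<^sub>R fact k)) sums Dg (\<lambda>i. exp (d i))"
    by (intro sums_Dg) (simp add: exp_def summable_exp_generic summable_sums)
  have eq: "(\<lambda>k. Dg (\<lambda>i. d i ^ k /\<^sub>R fact k)) = (\<lambda>k. (1 / fact k) *\<^sub>R cmatpow (Dg d) k)"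
    by (auto simp: vec_eq_iff cmatpow_Dg divide_inverse_commute)
  have s2: "(\<lambda>k. U ** ((1 / fact k) *\<^sub>R cmatpow (Dg d) k) ** conj_transpose U)
      sums (U ** Dg (\<lambda>i. exp (d i)) ** conj_transpose U)"
    using bounded_linear.sums[OF bounded_linear_conjmap s1[unfolded eq]] .
  have "(\<lambda>k. (1 / fact k) *\<^sub>R cmatpow (U ** Dg d ** conj_transpose U) k)
      = (\<lambda>k. U ** ((1 / fact k) *\<^sub>R cmatpow (Dg d) k) ** conj_transpose U)"
    by (simp add: cmatpow_conj[OF assms] matrix_scalar_ac scalar_matrix_assoc)
  then show ?thesis using s2 unfolding cmat_exp_def by (simp add: sums_iff)
qed


definition cinner :: "complex^'n \<Rightarrow> complex^'n \<Rightarrow> complex" where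
  "cinner x y = (\<Sum>i\<in>UNIV. cnj (x$i) * y$i)"

lemma cinner_add_right: "cinner x (y + z) = cinner x y + cinner x z"
  by (simp add: cinner_def distrib_left sum.distrib)
lemma cinner_diff_right: "cinner x (y - z) = cinner x y - cinner x z"
  by (simp add: cinner_def right_diff_distrib sum_subtractf)
lemma cinner_add_left: "cinner (x + y) z = cinner x z + cinner y z"
  by (simp add: cinner_def distrib_right sum.distrib)
lemma cinner_diff_left: "cinner (x - y) z = cinner x z - cinner y z"
  by (simp add: cinner_def left_diff_distrib sum_subtractf)
lemma cinner_smult_right: "cinner x (c *s y) = c * cinner x y"
  by (simp add: cinner_def sum_distrib_left mult.left_commute)
lemma cinner_smult_left: "cinner (c *s x) y = cnj c * cinner x y"
  by (simp add: cinner_def sum_distrib_left mult.assoc)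
lemma cinner_zero_right[simp]: "cinner x 0 = 0"
  by (simp add: cinner_def)
lemma cinner_zero_left[simp]: "cinner 0 x = 0"
  by (simp add: cinner_def)
lemma cinner_commute: "cinner y x = cnj (cinner x y)"
  by (simp add: cinner_def mult.commute)
lemma cinner_sum_right: "cinner x (\<Sum>s\<in>S. f s) = (\<Sum>s\<in>S. cinner x (f s))"
  by (simp add: cinner_def sum_distrib_left sum_component) (rule sum.swap)

lemma cinner_mv: "cinner x (A *v y) = cinner (conj_transpose A *v x) y"
  by (simp add: cinner_def matrix_vector_mult_def sum_distrib_left sum_distrib_right mult_ac)
     (rule sum.swap)

lemma norm_sq_vec: "(norm (x::complex^'n))^2 = (\<Sum>i\<in>UNIV. (cmod (x$i))^2)"
  by (simp add: norm_vec_def L2_set_def sum_nonneg)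

lemma cinner_self: "cinner x x = complex_of_real ((norm x)^2)"
proof -
  have "cinner x x = (\<Sum>i\<in>UNIV. complex_of_real ((cmod (x$i))^2))"
    unfolding cinner_def by (rule sum.cong[OF refl]) (subst complex_norm_square, simp add: mult.commute)
  then show ?thesis by (simp add: norm_sq_vec)
qed

lemma Re_cinner: "Re (cinner x y) = inner x y"
  by (simp add: cinner_def inner_vec_def inner_complex_def)

lemma mv_smult: "A *v (c *s x) = c *s (A *v (x::complex^'n))"
  by (simp add: vec_eq_iff matrix_vector_mult_def sum_distrib_left mult_ac)

lemma mv_mat: "mat k *v x = k *s (x::complex^'n)"
  by (simp add: vec_eq_iff matrix_vector_mult_def mat_def sum_if_left)

lemma scaleR_smult: "r *\<^sub>R x = complex_of_real r *s (x::complex^'n)"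
proof (rule vec_eq_iff[THEN iffD2], rule allI)
  fix i show "(r *\<^sub>R x) $ i = (complex_of_real r *s x) $ i"
    by (simp only: vector_scaleR_component vector_smult_component) (rule scaleR_conv_of_real)
qed

definition csub :: "(complex^'n) set \<Rightarrow> bool" where
  "csub W \<longleftrightarrow> 0 \<in> W \<and> (\<forall>x\<in>W. \<forall>y\<in>W. x + y \<in> W) \<and> (\<forall>x\<in>W. \<forall>c. c *s x \<in> W)"

lemma csub_subspace: "csub W \<Longrightarrow> subspace W"
  by (auto simp: csub_def subspace_def scaleR_smult)

lemma csub_smult: "csub W \<Longrightarrow> x \<in> W \<Longrightarrow> c *s x \<in> W"
  by (auto simp: csub_def)

lemma csub_add: "csub W \<Longrightarrow> x \<in> W \<Longrightarrow> y \<in> W \<Longrightarrow> x + y \<in> W"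
  by (auto simp: csub_def)

lemma csub_diff: "csub W \<Longrightarrow> x \<in> W \<Longrightarrow> y \<in> W \<Longrightarrow> x - y \<in> W"
proof -
  assume a: "csub W" "x \<in> W" "y \<in> W"
  have "x - y = x + (-1) *s y" by (simp add: vec_eq_iff)
  then show ?thesis using a csub_smult[of W y "-1"] csub_add by metis
qed

lemma hermitian_eigvec:
  fixes H :: "complex^'n^'n"
  assumes herm: "conj_transpose H = H" and W: "csub W" and x0: "x0 \<in> W" "x0 \<noteq> 0"
    and inv: "\<And>x. x \<in> W \<Longrightarrow> H *v x \<in> W"
  shows "\<exists>x\<in>W. x \<noteq> 0 \<and> (\<exists>l::real. H *v x = complex_of_real l *s x)"
proof -
  define f where "f x = Re (cinner x (H *v x))" for x
  define K where "K = sphere (0::complex^'n) 1 \<inter> W"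
  have "closed W" using closed_subspace csub_subspace W by blast
  then have cK: "compact K" unfolding K_def by (intro compact_Int_closed compact_sphere)
  have "norm ((1 / norm x0) *\<^sub>R x0) = 1" using x0 by simp
  moreover have "(1 / norm x0) *\<^sub>R x0 \<in> W" using x0 W by (simp only: scaleR_smult csub_smult)
  ultimately have "(1 / norm x0) *\<^sub>R x0 \<in> K" unfolding K_def by simp
  then have Kne: "K \<noteq> {}" by blast
  have cont: "continuous_on K f"
    unfolding f_def cinner_def matrix_vector_mult_def
    by (simp only: vec_lambda_beta) (intro continuous_intros)
  obtain x1 where x1: "x1 \<in> K" "\<And>y. y \<in> K \<Longrightarrow> f y \<le> f x1"
    using continuous_attains_sup[OF cK Kne cont] by blast
  define l where "l = f x1"
  have x1W: "x1 \<in> W" and nx1: "norm x1 = 1" using x1 by (auto simp: K_def)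
  have fscale: "f (r *\<^sub>R y) = r^2 * f y" for r y
  proof -
    have "cinner (r *\<^sub>R y) (H *v (r *\<^sub>R y)) = complex_of_real (r^2) * cinner y (H *v y)"
      by (simp add: scaleR_smult mv_smult cinner_smult_left cinner_smult_right power2_eq_square)
    then show ?thesis unfolding f_def by simp
  qed
  have bound: "f y \<le> l * (norm y)^2" if "y \<in> W" for y
  proof (cases "y = 0")
    case True then show ?thesis by (simp add: f_def)
  next
    case False
    have "norm ((1 / norm y) *\<^sub>R y) = 1" using False by simp
    moreover have "(1 / norm y) *\<^sub>R y \<in> W" using that W by (simp only: scaleR_smult csub_smult)
    ultimately have "(1 / norm y) *\<^sub>R y \<in> K" unfolding K_def by simp
    then have "f ((1 / norm y) *\<^sub>R y) \<le> l" using x1 l_def by blast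
    then have "f y / (norm y)^2 \<le> l" by (simp add: fscale power_divide)
    then show ?thesis using False by (simp add: divide_le_eq mult.commute)
  qed
  define M where "M = mat (complex_of_real l) - H"
  have hermM: "conj_transpose M = M" unfolding M_def by (simp add: ct_diff herm)
  have Mv: "M *v y = complex_of_real l *s y - H *v y" for y
    unfolding M_def by (simp add: matrix_vector_mult_diff_rdistrib mv_mat)
  have qM: "Re (cinner y (M *v y)) = l * (norm y)^2 - f y" for y
    unfolding Mv f_def by (simp add: cinner_diff_right cinner_smult_right cinner_self)
  have qpos: "Re (cinner y (M *v y)) \<ge> 0" if "y \<in> W" for y
    using bound[OF that] qM[of y] by simp
  have q1: "Re (cinner x1 (M *v x1)) = 0" using qM[of x1] nx1 l_def by simp
  define z where "z = M *v x1"
  have zW: "z \<in> W" unfolding z_def Mv using x1W inv W by (simp add: csub_diff csub_smult)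
  have "z = 0"
  proof (rule ccontr)
    assume z0: "z \<noteq> 0"
    define a where "a = (norm z)^2"
    define b where "b = Re (cinner z (M *v z))"
    have a0: "a > 0" using z0 by (simp add: a_def)
    have b0: "b \<ge> 0" unfolding b_def using qpos zW by blast
    define e where "e = a / (b + 1)"
    have e0: "e > 0" using a0 b0 by (simp add: e_def)
    have cz: "cinner x1 (M *v z) = complex_of_real a"
      using cinner_mv[of x1 M z] hermM by (simp add: z_def[symmetric] cinner_self a_def)
    have czx: "Re (cinner z (M *v x1)) = a"
      by (simp add: z_def[symmetric] cinner_self a_def)
    have key: "Re (cinner (x1 - complex_of_real e *s z) (M *v (x1 - complex_of_real e *s z)))
        = - 2 * e * a + e^2 * b"
    proof -
      let ?c = "complex_of_real e"
      have e1: "M *v (x1 - ?c *s z) = z - ?c *s (M *v z)"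
        by (simp add: z_def matrix_vector_mult_diff_distrib mv_smult)
      have e2: "cinner (x1 - ?c *s z) (z - ?c *s (M *v z))
          = cinner x1 z - ?c * cinner x1 (M *v z) - cnj ?c * cinner z z + cnj ?c * ?c * cinner z (M *v z)"
        by (simp add: cinner_diff_left cinner_diff_right cinner_smult_left cinner_smult_right algebra_simps)
      have e3: "Re (cinner x1 z) = 0" using q1 by (simp add: z_def)
      show ?thesis unfolding e1 e2 using e3 cz
        by (simp add: cinner_self a_def b_def[symmetric] power2_eq_square algebra_simps)
    qed
    have "x1 - complex_of_real e *s z \<in> W" using x1W zW W by (simp add: csub_diff csub_smult)
    then have ge: "- 2 * e * a + e^2 * b \<ge> 0" using qpos key by metis
    have "e * b < 2 * a"
    proof -
      have "e * b = a * (b / (b + 1))" by (simp add: e_def)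
      also have "\<dots> < a * 2" using a0 b0 by (intro mult_strict_left_mono) (auto simp: divide_less_eq)
      finally show ?thesis by simp
    qed
    then have "e * (e * b - 2 * a) < 0" using e0 by (simp add: mult_pos_neg)
    then show False using ge by (simp add: algebra_simps power2_eq_square)
  qed
  then have "H *v x1 = complex_of_real l *s x1" unfolding z_def Mv by simp
  moreover have "x1 \<noteq> 0" using nx1 by auto
  ultimately show ?thesis using x1W by blast
qed


definition ON :: "(complex^'n) set \<Rightarrow> bool" where
  "ON S \<longleftrightarrow> (\<forall>s\<in>S. cinner s s = 1) \<and> (\<forall>s\<in>S. \<forall>t\<in>S. s \<noteq> t \<longrightarrow> cinner s t = 0)"

definition CE :: "complex^'n^'n \<Rightarrow> complex^'n^'n \<Rightarrow> (complex^'n) set \<Rightarrow> bool" where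
  "CE H1 H2 S \<longleftrightarrow> (\<forall>s\<in>S. (\<exists>a::real. H1 *v s = complex_of_real a *s s) \<and> (\<exists>b::real. H2 *v s = complex_of_real b *s s))"

lemma ON_card: fixes S :: "(complex^'n) set" assumes "ON S" shows "finite S \<and> card S \<le> DIM(complex^'n)"
proof -
  have "pairwise orthogonal S"
    using assms unfolding ON_def pairwise_def orthogonal_def
    by (metis Re_cinner zero_complex.sel(1))
  moreover have "0 \<notin> S" using assms unfolding ON_def by force
  ultimately have "independent S" by (rule pairwise_orthogonal_independent)
  then show ?thesis using independent_bound[of S] by simp
qed

lemma axis_cinner: "cinner s (axis j 1) = cnj (s $ j)"
  by (simp add: cinner_def axis_def sum_if_right)

lemma ct_conj_entry:
  "(conj_transpose U ** A ** U) $ i $ j = cinner (column i U) (A *v column j U)"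
  by (simp add: matrix_matrix_mult_def matrix_vector_mult_def column_def cinner_def
      sum_distrib_left sum_distrib_right mult_ac) (rule sum.swap)

lemma spectral_pair:
  fixes H1 H2 :: "complex^'n^'n"
  assumes h1: "conj_transpose H1 = H1" and h2: "conj_transpose H2 = H2" and comm: "H1 ** H2 = H2 ** H1"
  shows "\<exists>U a b. conj_transpose U ** U = mat 1 \<and> U ** conj_transpose U = mat 1 \<and>
     H1 = U ** Dg (\<lambda>i. complex_of_real (a i)) ** conj_transpose U \<and>
     H2 = U ** Dg (\<lambda>i. complex_of_real (b i)) ** conj_transpose U"
proof -
  define P where "P S \<longleftrightarrow> ON S \<and> CE H1 H2 S" for S :: "(complex^'n) set"
  have "P {}" by (simp add: P_def ON_def CE_def)
  have Pk: "\<exists>S. P S \<and> card S = 0" using \<open>P {}\<close> by (intro exI[of _ "{}"]) simp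
  have bnd: "\<forall>y. (\<exists>S. P S \<and> card S = y) \<longrightarrow> y \<le> DIM(complex^'n)"
    using ON_card unfolding P_def by blast
  obtain k where k: "\<exists>S. P S \<and> card S = k" and kmax0: "\<forall>y. (\<exists>S. P S \<and> card S = y) \<longrightarrow> y \<le> k"
    using Nat.ex_has_greatest_nat[OF Pk bnd] by blast
  have kmax: "\<And>y. (\<exists>S. P S \<and> card S = y) \<Longrightarrow> y \<le> k" using kmax0 by blast
  from k obtain S where PS: "P S" and cS: "card S = k" by blast
  have fS: "finite S" using PS ON_card P_def by blast
  have ONS: "ON S" and CES: "CE H1 H2 S" using PS P_def by auto
  have invH: "cinner s (H *v w) = 0"
    if sS: "s \<in> S" and w: "\<forall>s\<in>S. cinner s w = 0" and hH: "conj_transpose H = H"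
      and ev: "\<exists>a::real. H *v s = complex_of_real a *s s"
    for s w H
  proof -
    obtain a :: real where "H *v s = complex_of_real a *s s" using ev by blast
    then show ?thesis using cinner_mv[of s H w] sS w hH by (simp add: cinner_smult_left)
  qed
  have span: "x = (\<Sum>s\<in>S. cinner s x *s s)" for x
  proof (rule ccontr)
    assume nx: "x \<noteq> (\<Sum>s\<in>S. cinner s x *s s)"
    define y where "y = x - (\<Sum>s\<in>S. cinner s x *s s)"
    define W where "W = {w. \<forall>s\<in>S. cinner s w = 0}"
    have cW: "csub W" unfolding csub_def W_def
      by (simp add: cinner_add_right cinner_smult_right)
    have yW: "y \<in> W"
    proof -
      have "cinner t (\<Sum>s\<in>S. cinner s x *s s) = cinner t x" if "t \<in> S" for t
      proof -
        have "cinner t (\<Sum>s\<in>S. cinner s x *s s) = (\<Sum>s\<in>S. cinner s x * cinner t s)"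
          by (simp add: cinner_sum_right cinner_smult_right)
        also have "\<dots> = (\<Sum>s\<in>S. if s = t then cinner t x else 0)"
          using ONS that unfolding ON_def by (intro sum.cong) auto
        also have "\<dots> = cinner t x" using fS that by simp
        finally show ?thesis .
      qed
      then show ?thesis unfolding W_def y_def by (simp add: cinner_diff_right)
    qed
    have y0: "y \<noteq> 0" using nx unfolding y_def by simp
    have inv1: "H1 *v w \<in> W" if "w \<in> W" for w
      using that CES h1 invH unfolding W_def CE_def by blast
    have inv2: "H2 *v w \<in> W" if "w \<in> W" for w
      using that CES h2 invH unfolding W_def CE_def by blast
    obtain x1 l where x1: "x1 \<in> W" "x1 \<noteq> 0" "H1 *v x1 = complex_of_real l *s x1"
      using hermitian_eigvec[OF h1 cW yW y0 inv1] by blast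
    define V where "V = {v \<in> W. H1 *v v = complex_of_real l *s v}"
    have cV: "csub V" using cW unfolding csub_def V_def
      by (simp add: matrix_vector_right_distrib mv_smult vector_add_ldistrib vector_smult_assoc mult.commute)
    have x1V: "x1 \<in> V" using x1 V_def by simp
    have inv3: "H2 *v v \<in> V" if "v \<in> V" for v
    proof -
      have "H1 *v (H2 *v v) = H2 *v (H1 *v v)" by (simp add: matrix_vector_mul_assoc comm)
      also have "\<dots> = complex_of_real l *s (H2 *v v)" using that by (simp add: V_def mv_smult)
      finally show ?thesis using inv2 that V_def by simp
    qed
    obtain x2 m where x2: "x2 \<in> V" "x2 \<noteq> 0" "H2 *v x2 = complex_of_real m *s x2"
      using hermitian_eigvec[OF h2 cV x1V x1(2) inv3] by blast
    define u where "u = complex_of_real (1 / norm x2) *s x2"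
    have uW: "u \<in> W" using x2 cV V_def u_def csub_smult by blast
    have "cinner u u = cnj (complex_of_real (1 / norm x2)) * (complex_of_real (1 / norm x2) * cinner x2 x2)"
      by (simp only: u_def cinner_smult_left cinner_smult_right mult.left_commute)
    then have uu: "cinner u u = 1" using x2(2)
      by (simp add: cinner_self power2_eq_square)
    have u1: "H1 *v u = complex_of_real l *s u"
      using x2 by (simp add: u_def V_def mv_smult vector_smult_assoc mult.commute)
    have u2: "H2 *v u = complex_of_real m *s u"
      using x2 by (simp add: u_def mv_smult vector_smult_assoc mult.commute)
    have uS: "u \<notin> S" using uW uu unfolding W_def by auto
    have "P (insert u S)"
      unfolding P_def ON_def CE_def
    proof (intro conjI ballI impI)
      fix s assume "s \<in> insert u S"
      then show "cinner s s = 1" using uu ONS ON_def by auto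
    next
      fix s t assume st: "s \<in> insert u S" "t \<in> insert u S" "s \<noteq> t"
      show "cinner s t = 0"
      proof -
        { assume "s = u" "t \<in> S"
          then have "cinner s t = cnj (cinner t u)" using cinner_commute by metis
          then have ?thesis using uW \<open>t \<in> S\<close> W_def by simp }
        moreover
        { assume "t = u" "s \<in> S" then have ?thesis using uW W_def by simp }
        moreover
        { assume "s \<in> S" "t \<in> S" then have ?thesis using ONS st ON_def by blast }
        ultimately show ?thesis using st by blast
      qed
    next
      fix s assume "s \<in> insert u S"
      then show "\<exists>a::real. H1 *v s = complex_of_real a *s s" using u1 CES CE_def by blast
    next
      fix s assume "s \<in> insert u S"
      then show "\<exists>a::real. H2 *v s = complex_of_real a *s s" using u2 CES CE_def by blast
    qed
    then have "card (insert u S) \<le> k" using kmax by blast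
    then show False using uS fS cS by simp
  qed
  have cardS: "card S = CARD('n)"
  proof -
    have e: "1 = (\<Sum>s\<in>S. cnj (s $ j) * s $ j)" for j
    proof -
      have "(axis j 1 :: complex^'n) $ j = (\<Sum>s\<in>S. cinner s (axis j 1) *s s) $ j"
        using span by metis
      then show ?thesis by (simp add: axis_cinner)
    qed
    have "of_nat CARD('n) = (\<Sum>j\<in>(UNIV::'n set). (1::complex))" by simp
    also have "\<dots> = (\<Sum>j\<in>UNIV. \<Sum>s\<in>S. cnj (s $ j) * s $ j)" using e by simp
    also have "\<dots> = (\<Sum>s\<in>S. cinner s s)" unfolding cinner_def by (rule sum.swap)
    also have "\<dots> = (\<Sum>s\<in>S. 1)" using ONS unfolding ON_def by (intro sum.cong) auto
    also have "\<dots> = of_nat (card S)" by simp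
    finally show ?thesis by (metis of_nat_eq_iff)
  qed
  obtain g where g: "bij_betw g (UNIV::'n set) S"
    using finite_same_card_bij[of "UNIV::'n set" S] fS cardS by auto
  have gS: "g i \<in> S" for i using g bij_betwE by blast
  have ginj: "g i = g j \<longleftrightarrow> i = j" for i j using g by (auto simp: bij_betw_def inj_on_def)
  obtain af where af: "\<And>s. s \<in> S \<Longrightarrow> H1 *v s = complex_of_real (af s) *s s"
    using CES unfolding CE_def by metis
  obtain bf where bf: "\<And>s. s \<in> S \<Longrightarrow> H2 *v s = complex_of_real (bf s) *s s"
    using CES unfolding CE_def by metis
  define U :: "complex^'n^'n" where "U = (\<chi> i j. g j $ i)"
  have colU: "column j U = g j" for j by (simp add: U_def column_def vec_eq_iff)
  have gg: "cinner (g i) (g j) = (if i = j then 1 else 0)" for i j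
    using ONS gS ginj unfolding ON_def by auto
  have UU: "conj_transpose U ** U = mat 1"
  proof -
    have "(conj_transpose U ** mat 1 ** U) $ i $ j = mat 1 $ i $ j" for i j
      unfolding ct_conj_entry colU matrix_vector_mul_lid gg by (simp add: mat_def)
    then show ?thesis by (simp add: vec_eq_iff)
  qed
  have UU': "U ** conj_transpose U = mat 1" using UU matrix_left_right_inverse by blast
  have rep: "H = U ** Dg (\<lambda>i. complex_of_real (cf (g i))) ** conj_transpose U"
    if cf: "\<And>s. s \<in> S \<Longrightarrow> H *v s = complex_of_real (cf s) *s s" for H cf
  proof -
    have "conj_transpose U ** H ** U = Dg (\<lambda>i. complex_of_real (cf (g i)))"
      by (simp add: vec_eq_iff ct_conj_entry colU cf gS cinner_smult_right gg)
    then have "U ** (conj_transpose U ** H ** U) ** conj_transpose U = U ** Dg (\<lambda>i. complex_of_real (cf (g i))) ** conj_transpose U"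
      by simp
    then have "H ** U ** conj_transpose U = U ** Dg (\<lambda>i. complex_of_real (cf (g i))) ** conj_transpose U"
      using UU' by (simp add: matrix_mul_assoc)
    moreover have "H ** U ** conj_transpose U = H" using UU' by (metis matrix_mul_assoc matrix_mul_rid)
    ultimately show ?thesis by simp
  qed
  have r1: "H1 = U ** Dg (\<lambda>i. complex_of_real (af (g i))) ** conj_transpose U"
    by (rule rep) (rule af)
  have r2: "H2 = U ** Dg (\<lambda>i. complex_of_real (bf (g i))) ** conj_transpose U"
    by (rule rep) (rule bf)
  show ?thesis
    by (rule exI[of _ U], rule exI[of _ "\<lambda>i. af (g i)"], rule exI[of _ "\<lambda>i. bf (g i)"])
       (use UU UU' r1 r2 in simp)
qed


lemma neg1_sq: assumes "exp (\<i> * complex_of_real t) = -1" shows "pi^2 \<le> t^2"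
proof -
  have "cis t = -1" using assms by (simp add: cis_conv_exp)
  then have "Re (cis t) = -1" by simp
  then have "cos t = -1" by simp
  then obtain k :: int where k: "t = (2 * real_of_int k + 1) * pi" using cos_eq_minus1 by auto
  have "2 * k + 1 \<noteq> 0" by presburger
  then have "\<bar>2 * k + 1\<bar> \<ge> 1" using zabs_less_one_iff[of "2 * k + 1"] by linarith
  then have "(1::real) \<le> of_int \<bar>2 * k + 1\<bar>" using of_int_le_iff[of 1 "\<bar>2 * k + 1\<bar>", where 'a=real] by simp
  then have "1 \<le> \<bar>2 * real_of_int k + 1\<bar>" by simp
  then have "1 \<le> (2 * real_of_int k + 1)^2"
    using abs_le_square_iff[of 1 "2 * real_of_int k + 1"] by simp
  then have "1 * pi^2 \<le> (2 * real_of_int k + 1)^2 * pi^2" by (intro mult_right_mono) auto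
  then show ?thesis by (simp add: k power_mult_distrib)
qed

lemma LB_sum:
  fixes \<theta> :: "'n::finite \<Rightarrow> real"
  assumes "\<And>j. pi^2 \<le> (\<theta> j + c)^2" "(\<Sum>j\<in>UNIV. \<theta> j) = 0"
  shows "real CARD('n) * pi^2 - real CARD('n) * c^2 \<le> (\<Sum>j\<in>UNIV. (\<theta> j)^2)"
proof -
  have "(\<Sum>j\<in>UNIV. (\<theta> j + c)^2) = (\<Sum>j\<in>UNIV. (\<theta> j)^2) + 2 * c * (\<Sum>j\<in>UNIV. \<theta> j) + real CARD('n) * c^2"
  proof -
    have "(\<Sum>j\<in>UNIV. (\<theta> j + c)^2) = (\<Sum>j\<in>UNIV. (\<theta> j)^2 + 2 * c * \<theta> j + c^2)"
      by (intro sum.cong) (auto simp: power2_sum mult_ac)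
    also have "\<dots> = (\<Sum>j\<in>UNIV. (\<theta> j)^2) + (\<Sum>j\<in>UNIV. 2 * c * \<theta> j) + real CARD('n) * c^2"
      by (simp add: sum.distrib)
    finally show ?thesis by (simp add: sum_distrib_left[symmetric])
  qed
  moreover have "real CARD('n) * pi^2 \<le> (\<Sum>j\<in>UNIV. (\<theta> j + c)^2)"
    using sum_mono[of UNIV "\<lambda>_. pi^2" "\<lambda>j. (\<theta> j + c)^2"] assms(1) by simp
  ultimately show ?thesis using assms(2) by simp
qed

lemma sq_pi_exp:
  assumes "(t + c)^2 = pi^2"
  shows "exp (\<i> * complex_of_real t) = - exp (- \<i> * complex_of_real c)"
proof -
  have "t + c = pi \<or> t + c = - pi" using assms
    by (metis power2_eq_iff)
  then have "exp (\<i> * complex_of_real (t + c)) = -1"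
    by (auto simp: exp_eq_polar complex_eq_iff)
  moreover have "exp (\<i> * complex_of_real t) = exp (\<i> * complex_of_real (t + c)) * exp (- \<i> * complex_of_real c)"
    by (simp add: exp_add[symmetric] algebra_simps)
  ultimately show ?thesis by simp
qed

lemma parity_sum:
  fixes p :: "'n::finite \<Rightarrow> bool"
  assumes "odd CARD('n)"
  shows "1 \<le> \<bar>\<Sum>j\<in>UNIV. (if p j then 1 else -1 :: real)\<bar>"
proof -
  define q where "q j = (if p j then 1 else 0 :: int)" for j
  have "(\<Sum>j\<in>UNIV. (if p j then 1 else -1 :: real)) = real_of_int (\<Sum>j\<in>UNIV. 2 * q j - 1)"
    by (simp add: q_def of_int_sum) (intro sum.cong, auto)
  also have "(\<Sum>j\<in>UNIV. 2 * q j - 1) = 2 * (\<Sum>j\<in>UNIV. q j) - int CARD('n)"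
    by (simp add: sum_subtractf sum_distrib_left)
  finally have eq: "(\<Sum>j\<in>UNIV. (if p j then 1 else -1 :: real)) = real_of_int (2 * (\<Sum>j\<in>UNIV. q j) - int CARD('n))" .
  have "odd (2 * (\<Sum>j\<in>UNIV. q j) - int CARD('n))" using assms by simp
  then have "2 * (\<Sum>j\<in>UNIV. q j) - int CARD('n) \<noteq> 0" by (metis even_zero)
  then have "1 \<le> \<bar>2 * (\<Sum>j\<in>UNIV. q j) - int CARD('n)\<bar>" by linarith
  then show ?thesis unfolding eq by linarith
qed


lemma UB_real:
  fixes \<theta> :: "'n::finite \<Rightarrow> real"
  assumes n2: "CARD('n) \<ge> 2" and s0: "(\<Sum>j\<in>UNIV. \<theta> j) = 0" and d: "\<And>i j. \<theta> i - \<theta> j \<le> 2*pi"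
  shows "(\<Sum>j\<in>UNIV. (\<theta> j)^2) \<le> real CARD('n) * pi^2 \<and>
         ((\<Sum>j\<in>UNIV. (\<theta> j)^2) = real CARD('n) * pi^2 \<longrightarrow> (\<forall>j. (\<theta> j)^2 = pi^2)) \<and>
         (odd CARD('n) \<longrightarrow> (\<Sum>j\<in>UNIV. (\<theta> j)^2) \<le> (real CARD('n) - 1 / real CARD('n)) * pi^2) \<and>
         (odd CARD('n) \<longrightarrow> (\<Sum>j\<in>UNIV. (\<theta> j)^2) = (real CARD('n) - 1 / real CARD('n)) * pi^2 \<longrightarrow>
            (\<forall>j. (\<theta> j + pi / real CARD('n))^2 = pi^2) \<or> (\<forall>j. (\<theta> j - pi / real CARD('n))^2 = pi^2))"
proof -
  define n where "n = real CARD('n)"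
  have n0: "n > 0" and n2': "n \<ge> 2" using n2 by (auto simp: n_def)
  define t where "t = Min (range \<theta>)"
  have tle: "t \<le> \<theta> j" for j unfolding t_def by (rule Min_le) auto
  have "t \<in> range \<theta>" unfolding t_def by (rule Min_in) auto
  then obtain j0 where j0: "t = \<theta> j0" by blast
  define s where "s = t + pi"
  define v where "v j = \<theta> j - s" for j
  have vb: "- pi \<le> v j \<and> v j \<le> pi" for j
    using tle[of j] d[of j j0] unfolding v_def s_def j0 by auto
  have sv: "(\<Sum>j\<in>UNIV. v j) = - n * s"
    unfolding v_def by (simp add: sum_subtractf s0 n_def)
  have eq: "(\<Sum>j\<in>UNIV. (\<theta> j)^2) = (\<Sum>j\<in>UNIV. (v j)^2) - n * s^2"
  proof -
    have "(\<Sum>j\<in>UNIV. (\<theta> j)^2) = (\<Sum>j\<in>UNIV. (v j)^2 + 2 * s * v j + s^2)"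
      by (intro sum.cong) (auto simp: v_def power2_eq_square algebra_simps)
    also have "\<dots> = (\<Sum>j\<in>UNIV. (v j)^2) + 2 * s * (\<Sum>j\<in>UNIV. v j) + n * s^2"
      by (simp add: sum.distrib sum_distrib_left n_def)
    finally show ?thesis unfolding sv by (simp add: power2_eq_square algebra_simps)
  qed
  have vsq: "(v j)^2 \<le> pi^2" for j
    using vb[of j] abs_le_square_iff[of "v j" pi] by (simp add: abs_le_iff)
  have sumv: "(\<Sum>j\<in>UNIV. (v j)^2) \<le> n * pi^2"
    using sum_mono[of UNIV "\<lambda>j. (v j)^2" "\<lambda>_. pi^2"] vsq by (simp add: n_def)
  have ns: "n * s^2 \<ge> 0" using n0 by simp
  have P1: "(\<Sum>j\<in>UNIV. (\<theta> j)^2) \<le> n * pi^2" using eq sumv ns by linarith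
  have P2: "(\<forall>j. (\<theta> j)^2 = pi^2)" if h: "(\<Sum>j\<in>UNIV. (\<theta> j)^2) = n * pi^2"
  proof -
    have "n * s^2 \<le> 0" using eq sumv h by linarith
    then have s00: "s = 0" using n0 by (simp add: mult_le_0_iff)
    have "(\<Sum>j\<in>UNIV. pi^2 - (v j)^2) = 0"
      using eq h s00 by (simp add: sum_subtractf n_def)
    then have "\<forall>j\<in>UNIV. pi^2 - (v j)^2 = 0"
      using vsq by (subst sum_nonneg_eq_0_iff[symmetric]) auto
    then show ?thesis using s00 by (simp add: v_def)
  qed
  have P3: "(\<Sum>j\<in>UNIV. (\<theta> j)^2) \<le> (n - 1 / n) * pi^2 \<and>
        ((\<Sum>j\<in>UNIV. (\<theta> j)^2) = (n - 1 / n) * pi^2 \<longrightarrow>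
            (\<forall>j. (\<theta> j + pi / n)^2 = pi^2) \<or> (\<forall>j. (\<theta> j - pi / n)^2 = pi^2))"
    if odd: "odd CARD('n)"
  proof -
    have "CARD('n) \<noteq> 2" using odd by auto
    then have "CARD('n) \<ge> 3" using n2 by linarith
    then have n3: "n \<ge> 3" unfolding n_def by simp
    define e where "e j = pi - \<bar>v j\<bar>" for j
    have e0: "0 \<le> e j" "e j \<le> pi" for j using vb[of j] by (auto simp: e_def)
    have vsq2: "(v j)^2 \<le> pi^2 - pi * e j" for j
    proof -
      have "(v j)^2 = (pi - e j)^2" by (simp add: e_def)
      also have "\<dots> = pi^2 - pi * e j + e j * (e j - pi)" by (simp add: power2_eq_square algebra_simps)
      also have "e j * (e j - pi) \<le> 0" using e0[of j] by (simp add: mult_nonneg_nonpos)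
      finally show ?thesis by simp
    qed
    define E where "E = (\<Sum>j\<in>UNIV. e j)"
    have E0: "E \<ge> 0" unfolding E_def using e0 by (simp add: sum_nonneg)
    have sumv2: "(\<Sum>j\<in>UNIV. (v j)^2) \<le> n * pi^2 - pi * E"
    proof -
      have "(\<Sum>j\<in>UNIV. (v j)^2) \<le> (\<Sum>j\<in>UNIV. pi^2 - pi * e j)" by (rule sum_mono) (rule vsq2)
      also have "\<dots> = n * pi^2 - pi * E" by (simp add: sum_subtractf sum_distrib_left E_def n_def)
      finally show ?thesis .
    qed
    define \<sigma> where "\<sigma> j = (if v j \<ge> 0 then 1 else -1 :: real)" for j
    have vs: "v j = \<sigma> j * (pi - e j)" for j by (simp add: \<sigma>_def e_def)
    have S1: "1 \<le> \<bar>\<Sum>j\<in>UNIV. \<sigma> j\<bar>" unfolding \<sigma>_def by (rule parity_sum[OF odd])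
    define V where "V = (\<Sum>j\<in>UNIV. v j)"
    have Veq: "V = pi * (\<Sum>j\<in>UNIV. \<sigma> j) - (\<Sum>j\<in>UNIV. \<sigma> j * e j)"
      unfolding V_def vs by (simp add: algebra_simps sum_subtractf sum_distrib_left)
    have se: "\<bar>\<Sum>j\<in>UNIV. \<sigma> j * e j\<bar> \<le> E"
    proof -
      have "\<bar>\<Sum>j\<in>UNIV. \<sigma> j * e j\<bar> \<le> (\<Sum>j\<in>UNIV. \<bar>\<sigma> j * e j\<bar>)" by (rule sum_abs)
      also have "\<dots> = E" unfolding E_def using e0 by (intro sum.cong) (auto simp: \<sigma>_def abs_mult)
      finally show ?thesis .
    qed
    have "pi * 1 \<le> pi * \<bar>\<Sum>j\<in>UNIV. \<sigma> j\<bar>" using S1 by (intro mult_left_mono) auto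
    then have A1: "pi \<le> \<bar>pi * (\<Sum>j\<in>UNIV. \<sigma> j)\<bar>" by (simp add: abs_mult)
    have A2: "\<bar>pi * (\<Sum>j\<in>UNIV. \<sigma> j)\<bar> - \<bar>\<Sum>j\<in>UNIV. \<sigma> j * e j\<bar> \<le> \<bar>V\<bar>"
      unfolding Veq by (rule abs_triangle_ineq2)
    have VE: "pi - E \<le> \<bar>V\<bar>" using A1 A2 se by linarith
    have Vs: "V = - n * s" using sv V_def by simp
    have nsV: "n * s^2 = V^2 / n" using n0 unfolding Vs by (simp add: power2_eq_square field_simps)
    have main: "(\<Sum>j\<in>UNIV. (\<theta> j)^2) \<le> n * pi^2 - pi * E - V^2 / n"
      using eq sumv2 nsV by linarith
    have key: "pi^2 \<le> n * pi * E + V^2 \<and> (n * pi * E + V^2 = pi^2 \<longrightarrow> E = 0 \<and> V^2 = pi^2)"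
    proof (cases "E \<ge> pi")
      case True
      have h1: "n * pi * E \<ge> 3 * pi * pi" using n3 True by (intro mult_mono) auto
      have h2: "pi * pi > 0" by simp
      have h3: "V * V \<ge> 0" by simp
      show ?thesis unfolding power2_eq_square using h1 h2 h3 by (intro conjI impI) linarith+
    next
      case False
      then have pE: "0 \<le> pi - E" by simp
      have "(pi - E)^2 \<le> V^2" using VE pE abs_le_square_iff[of "pi - E" V] by simp
      moreover have "n * pi * E + (pi - E)^2 - pi^2 = E * (E + (n - 2) * pi)"
        by (simp add: power2_eq_square algebra_simps)
      moreover have "E * (E + (n - 2) * pi) \<ge> 0" using E0 n3 by simp
      moreover have "E * (E + (n - 2) * pi) > 0" if "E > 0"
      proof -
        have "(n - 2) * pi > 0" using n3 by simp
        then show ?thesis using that by (intro mult_pos_pos) auto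
      qed
      ultimately have k1: "(pi - E)^2 \<le> V^2" and k2: "n * pi * E + (pi - E)^2 - pi^2 \<ge> 0"
        and k3: "E > 0 \<Longrightarrow> n * pi * E + (pi - E)^2 - pi^2 > 0" by auto
      show ?thesis
      proof (intro conjI impI)
        show "pi^2 \<le> n * pi * E + V^2" using k1 k2 by linarith
      next
        assume h: "n * pi * E + V^2 = pi^2"
        have "\<not> E > 0" using k1 k3 h by fastforce
        then show "E = 0" using E0 by simp
        then show "V^2 = pi^2" using h by simp
      qed
    qed
    have B: "(\<Sum>j\<in>UNIV. (\<theta> j)^2) \<le> (n - 1 / n) * pi^2"
    proof -
      have "pi^2 / n \<le> (n * pi * E + V^2) / n" using key n0 by (simp add: divide_right_mono)
      also have "\<dots> = pi * E + V^2 / n" using n0 by (simp add: field_simps)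
      finally show ?thesis using main by (simp add: algebra_simps)
    qed
    moreover have "(\<forall>j. (\<theta> j + pi / n)^2 = pi^2) \<or> (\<forall>j. (\<theta> j - pi / n)^2 = pi^2)"
      if h: "(\<Sum>j\<in>UNIV. (\<theta> j)^2) = (n - 1 / n) * pi^2"
    proof -
      have "(n - 1 / n) * pi^2 \<le> n * pi^2 - pi * E - V^2 / n" using main h by simp
      then have "n * ((n - 1 / n) * pi^2) \<le> n * (n * pi^2 - pi * E - V^2 / n)"
        using n0 by (simp add: mult_left_mono)
      then have "n * n * pi^2 - pi^2 \<le> n * n * pi^2 - n * pi * E - V^2"
        using n0 by (simp add: algebra_simps)
      then have "n * pi * E + V^2 = pi^2" using key by linarith
      then have EV: "E = 0" "V^2 = pi^2" using key by auto
      have "\<forall>j\<in>UNIV. e j = 0" using EV(1) e0 unfolding E_def by (subst sum_nonneg_eq_0_iff[symmetric]) auto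
      then have "\<bar>v j\<bar> = pi" for j by (simp add: e_def)
      then have vpi: "(v j)^2 = pi^2" for j by (metis power2_abs)
      have "V = pi \<or> V = - pi" using EV(2) by (simp add: power2_eq_iff)
      then show ?thesis
      proof
        assume "V = pi"
        then have "s = - pi / n" using Vs n0 by (simp add: field_simps)
        then have "\<theta> j + pi / n = v j" for j by (simp add: v_def)
        then show ?thesis using vpi by simp
      next
        assume "V = - pi"
        then have "s = pi / n" using Vs n0 by (simp add: field_simps)
        then have "\<theta> j - pi / n = v j" for j by (simp add: v_def)
        then show ?thesis using vpi by simp
      qed
    qed
    ultimately show ?thesis by blast
  qed
  show ?thesis using P1 P2 P3 unfolding n_def by blast
qed


lemma unit_exp_Arg: assumes "cmod z = 1" shows "exp (\<i> * complex_of_real (Arg z)) = z"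
proof -
  have "z \<noteq> 0" using assms by auto
  then have "cis (Arg z) = sgn z" by (rule cis_Arg)
  also have "sgn z = z" using assms by (simp add: sgn_eq)
  finally show ?thesis by (simp add: cis_conv_exp)
qed

lemma exp_2pi_int: "exp (\<i> * complex_of_real (2 * pi * real_of_int m)) = 1"
  by (simp add: exp_eq_1)

lemma lift_exists:
  fixes c :: "'n::finite \<Rightarrow> complex"
  assumes c1: "\<And>j. cmod (c j) = 1" and cp: "(\<Prod>j\<in>UNIV. c j) = 1"
  shows "\<exists>\<theta>::'n \<Rightarrow> real. (\<forall>j. exp (\<i> * complex_of_real (\<theta> j)) = c j) \<and> (\<Sum>j\<in>UNIV. \<theta> j) = 0 \<and> (\<forall>i j. \<theta> i - \<theta> j \<le> 2*pi)"
proof -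
  define \<phi> where "\<phi> j = Arg (c j)" for j
  have ephi: "exp (\<i> * complex_of_real (\<phi> j)) = c j" for j unfolding \<phi>_def by (rule unit_exp_Arg[OF c1])
  have phib: "\<bar>\<phi> j\<bar> \<le> pi" for j using Arg_bounded[of "c j"] unfolding \<phi>_def by auto
  have "exp (\<i> * complex_of_real (\<Sum>j\<in>UNIV. \<phi> j)) = (\<Prod>j\<in>UNIV. exp (\<i> * complex_of_real (\<phi> j)))"
    by (simp add: of_real_sum sum_distrib_left exp_sum)
  also have "\<dots> = 1" using ephi cp by simp
  finally obtain K :: int where K: "(\<Sum>j\<in>UNIV. \<phi> j) = 2 * pi * real_of_int K"
    by (auto simp: exp_eq_1)
  define th where "th k j = \<phi> j + 2 * pi * real_of_int (k j)" for k :: "'n \<Rightarrow> int" and j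
  define f where "f k = (\<Sum>j\<in>UNIV. (th k j)^2)" for k
  define A where "A = {k :: 'n \<Rightarrow> int. (\<Sum>j\<in>UNIV. k j) = - K}"
  define j0 :: 'n where "j0 = undefined"
  define k0 where "k0 j = (if j = j0 then - K else 0)" for j
  have k0A: "k0 \<in> A" unfolding A_def k0_def by simp
  define C where "C = f k0"
  define B :: int where "B = ceiling ((sqrt C + pi) / (2 * pi))"
  have bnd: "\<bar>k j\<bar> \<le> B" if "f k \<le> C" for k j
  proof -
    have "(th k j)^2 \<le> f k" unfolding f_def
      by (rule member_le_sum) auto
    then have "(th k j)^2 \<le> C" using that by simp
    then have "\<bar>th k j\<bar> \<le> sqrt C" using real_le_rsqrt by (metis real_sqrt_abs real_sqrt_le_mono)
    then have "2 * pi * \<bar>real_of_int (k j)\<bar> \<le> sqrt C + pi"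
      using phib[of j] unfolding th_def by (simp add: abs_mult)
    then have "\<bar>real_of_int (k j)\<bar> \<le> (sqrt C + pi) / (2 * pi)"
      by (simp add: field_simps)
    then have "real_of_int \<bar>k j\<bar> \<le> real_of_int B" unfolding B_def
      by (metis le_of_int_ceiling of_int_abs order_trans)
    then show ?thesis by linarith
  qed
  define F where "F = {k \<in> A. \<forall>j. k j \<in> {-B..B}}"
  have "F \<subseteq> Pi\<^sub>E UNIV (\<lambda>_. {-B..B})" unfolding F_def by (auto simp: PiE_UNIV_domain)
  then have fF: "finite F" by (rule finite_subset) (intro finite_PiE, auto)
  have inF: "k \<in> F" if "k \<in> A" "f k \<le> C" for k
  proof -
    have "k j \<in> {-B..B}" for j
    proof -
      have h: "\<bar>k j\<bar> \<le> B" using bnd that(2) by blast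
      show ?thesis using abs_le_D1[OF h] abs_le_D2[OF h] by simp
    qed
    then show ?thesis unfolding F_def using that by auto
  qed
  have k0F: "k0 \<in> F" using inF k0A by (simp add: C_def)
  obtain km where km: "is_arg_min f (\<lambda>x. x \<in> F) km"
    using ex_is_arg_min_if_finite[OF fF, of f] k0F by blast
  have kmF: "km \<in> F" and kmin: "\<And>k. k \<in> F \<Longrightarrow> \<not> f k < f km" using km by (auto simp: is_arg_min_def)
  have kmA: "km \<in> A" using kmF F_def by simp
  have opt: "f km \<le> f k" if "k \<in> A" for k
  proof (rule ccontr)
    assume "\<not> f km \<le> f k"
    then have lt: "f k < f km" by simp
    have "f km \<le> f k0" using kmin k0F by force
    then have "f k \<le> C" using lt C_def by simp
    then have "k \<in> F" using that inF by auto
    then show False using kmin lt by blast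
  qed
  define \<theta> where "\<theta> = th km"
  have e: "exp (\<i> * complex_of_real (\<theta> j)) = c j" for j
  proof -
    have "exp (\<i> * complex_of_real (\<theta> j)) = exp (\<i> * complex_of_real (\<phi> j)) * exp (\<i> * complex_of_real (2 * pi * real_of_int (km j)))"
      by (simp add: \<theta>_def th_def exp_add[symmetric] algebra_simps)
    then show ?thesis using ephi exp_2pi_int by simp
  qed
  have s: "(\<Sum>j\<in>UNIV. \<theta> j) = 0"
  proof -
    have "(\<Sum>j\<in>UNIV. \<theta> j) = (\<Sum>j\<in>UNIV. \<phi> j) + 2 * pi * real_of_int (\<Sum>j\<in>UNIV. km j)"
      by (simp add: \<theta>_def th_def sum.distrib sum_distrib_left of_int_sum)
    moreover have "(\<Sum>x\<in>UNIV. real_of_int (km x)) = - real_of_int K"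
    proof -
      have "(\<Sum>x\<in>UNIV. real_of_int (km x)) = real_of_int (\<Sum>x\<in>UNIV. km x)" by (simp add: of_int_sum)
      also have "\<dots> = - real_of_int K" using kmA A_def by simp
      finally show ?thesis .
    qed
    ultimately show ?thesis using K by simp
  qed
  have d: "\<theta> i - \<theta> j \<le> 2 * pi" for i j
  proof (cases "i = j")
    case True then show ?thesis by simp
  next
    case False
    define k' where "k' l = km l + (if l = i then -1 else 0) + (if l = j then 1 else 0)" for l
    have "(\<Sum>l\<in>UNIV. k' l) = (\<Sum>l\<in>UNIV. km l)"
      by (simp add: k'_def sum.distrib)
    then have "k' \<in> A" using kmA A_def by simp
    then have le: "f km \<le> f k'" by (rule opt)
    have "th k' l = \<theta> l + (if l = i then - 2 * pi else 0) + (if l = j then 2 * pi else 0)" for l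
      using False by (simp add: th_def \<theta>_def k'_def algebra_simps)
    then have "(th k' l)^2 = (\<theta> l)^2 + (if l = i then 4 * pi^2 - 4 * pi * \<theta> i else 0)
        + (if l = j then 4 * pi^2 + 4 * pi * \<theta> j else 0)" for l
      using False by (auto simp: power2_eq_square algebra_simps)
    then have "f k' = f km + (4 * pi^2 - 4 * pi * \<theta> i) + (4 * pi^2 + 4 * pi * \<theta> j)"
      unfolding f_def by (simp add: sum.distrib \<theta>_def)
    then have "0 \<le> 8 * pi^2 - 4 * pi * (\<theta> i - \<theta> j)" using le by (simp add: algebra_simps)
    then have "4 * pi * (\<theta> i - \<theta> j) \<le> 4 * pi * (2 * pi)" by (simp add: power2_eq_square algebra_simps)
    then show ?thesis by simp
  qed
  show ?thesis using e s d by blast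
qed


definition unitary :: "complex^'n^'n \<Rightarrow> bool" where
  "unitary U \<longleftrightarrow> conj_transpose U ** U = mat 1 \<and> U ** conj_transpose U = mat 1"

lemma h1: fixes U M V :: "complex^'n^'n" shows "mat c ** (U ** M ** V) = U ** (mat c ** M) ** V"
proof -
  have "mat c ** (U ** M ** V) = (mat c ** U) ** M ** V" by (simp only: matrix_mul_assoc)
  also have "mat c ** U = U ** mat c" by (rule mat_comm)
  also have "(U ** mat c) ** M ** V = U ** (mat c ** M) ** V" by (simp only: matrix_mul_assoc)
  finally show ?thesis .
qed

lemma h2: "mat c ** Dg d = Dg (\<lambda>j. c * d j)"
  by (simp add: Dg_const[symmetric] Dg_mult)

lemma h3: "U ** M1 ** V + U ** M2 ** V = U ** (M1 + M2) ** (V::complex^'n^'n)"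
  by (simp add: matrix_add_ldistrib matrix_add_rdistrib')

lemma h4: "Dg x + Dg y = Dg (\<lambda>j. x j + y j)"
  by (simp add: vec_eq_iff)

lemma h5: "unitary U \<Longrightarrow> conj_transpose U ** (U ** M ** conj_transpose U) ** U = M"
proof -
  assume u: "unitary U"
  have "conj_transpose U ** (U ** M ** conj_transpose U) ** U
     = (conj_transpose U ** U) ** M ** (conj_transpose U ** U)" by (simp only: matrix_mul_assoc)
  then show ?thesis using u unfolding unitary_def by simp
qed

lemma h6: "unitary U \<Longrightarrow> U ** mat c ** conj_transpose U = mat c"
proof -
  assume u: "unitary U"
  have "U ** mat c ** conj_transpose U = (mat c ** U) ** conj_transpose U" by (simp only: mat_comm)
  also have "\<dots> = mat c ** (U ** conj_transpose U)" by (simp only: matrix_mul_assoc)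
  finally show ?thesis using u unfolding unitary_def by simp
qed

lemma h7: "unitary U \<Longrightarrow> trace (U ** M ** conj_transpose U) = trace M"
proof -
  assume u: "unitary U"
  have "trace (U ** M ** conj_transpose U) = trace (conj_transpose U ** (U ** M))" by (rule trace_mul_sym)
  also have "\<dots> = trace ((conj_transpose U ** U) ** M)" by (simp only: matrix_mul_assoc)
  finally show ?thesis using u unfolding unitary_def by simp
qed

lemma h8: "conj_transpose (U ** M ** conj_transpose U) = U ** conj_transpose M ** conj_transpose U"
  by (simp add: ct_mult matrix_mul_assoc)

lemma h9: "U ** (- M) ** V = - (U ** M ** (V::complex^'n^'n))"
  by (simp add: vec_eq_iff matrix_matrix_mult_def sum_negf)

lemma h10: "Dg d = mat c \<Longrightarrow> d j = c"
proof -
  assume "Dg d = mat c"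
  then have "Dg d $ j $ j = mat c $ j $ j" by simp
  then show ?thesis by (simp add: mat_def)
qed

lemma Dg_uminus: "Dg (\<lambda>j. - d j) = - Dg d"
  by (simp add: vec_eq_iff)

lemma h11: "unitary U \<Longrightarrow> (U ** A ** conj_transpose U) ** (U ** B ** conj_transpose U) = U ** (A ** B) ** conj_transpose U"
proof -
  assume u: "unitary U"
  have "(U ** A ** conj_transpose U) ** (U ** B ** conj_transpose U) = U ** A ** (conj_transpose U ** U) ** B ** conj_transpose U"
    by (simp only: matrix_mul_assoc)
  then show ?thesis using u unfolding unitary_def by (simp add: matrix_mul_assoc)
qed

lemma frob_conj:
  assumes "unitary U"
  shows "(frob_norm (U ** Dg (\<lambda>j. \<i> * complex_of_real (\<theta> j)) ** conj_transpose U))^2 = (\<Sum>j\<in>UNIV. (\<theta> j)^2)"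
proof -
  let ?D = "Dg (\<lambda>j. \<i> * complex_of_real (\<theta> j))"
  define S where "S = (\<Sum>j\<in>UNIV. (\<theta> j)^2)"
  have "?D ** conj_transpose ?D = Dg (\<lambda>j. complex_of_real ((\<theta> j)^2))"
    by (simp add: ct_Dg Dg_mult power2_eq_square) (rule arg_cong[where f=Dg], rule ext, simp add: algebra_simps)
  then have "trace ((U ** ?D ** conj_transpose U) ** conj_transpose (U ** ?D ** conj_transpose U))
      = complex_of_real S"
    using assms by (simp add: h8 h11 h7 trace_Dg of_real_sum S_def)
  then have "frob_norm (U ** ?D ** conj_transpose U) = sqrt (cmod (complex_of_real S))"
    unfolding frob_norm_def by (simp only:)
  moreover have "S \<ge> 0" unfolding S_def by (simp add: sum_nonneg)
  ultimately show ?thesis by (simp add: S_def[symmetric])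
qed

lemma su_conj:
  assumes "unitary U" "(\<Sum>j\<in>UNIV. \<theta> j) = 0"
  shows "U ** Dg (\<lambda>j. \<i> * complex_of_real (\<theta> j)) ** conj_transpose U \<in> su"
proof -
  have "conj_transpose (Dg (\<lambda>j. \<i> * complex_of_real (\<theta> j))) = - Dg (\<lambda>j. \<i> * complex_of_real (\<theta> j))"
    by (simp add: ct_Dg Dg_uminus[symmetric])
  then have c: "conj_transpose (U ** Dg (\<lambda>j. \<i> * complex_of_real (\<theta> j)) ** conj_transpose U)
     = - (U ** Dg (\<lambda>j. \<i> * complex_of_real (\<theta> j)) ** conj_transpose U)"
    by (simp add: h8 h9)
  have "trace (U ** Dg (\<lambda>j. \<i> * complex_of_real (\<theta> j)) ** conj_transpose U) = \<i> * complex_of_real (\<Sum>j\<in>UNIV. \<theta> j)"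
    using assms(1) by (simp add: h7 trace_Dg of_real_sum sum_distrib_left)
  then show ?thesis using c assms(2) by (simp add: su_def)
qed

lemma log_diag:
  fixes X :: "complex^'n^'n"
  assumes "X \<in> su"
  shows "\<exists>U \<theta>. unitary U \<and> X = U ** Dg (\<lambda>j. \<i> * complex_of_real (\<theta> j)) ** conj_transpose U \<and> (\<Sum>j\<in>UNIV. \<theta> j) = 0"
proof -
  have ctX: "conj_transpose X = - X" and trX: "trace X = 0" using assms by (auto simp: su_def)
  define H where "H = mat (- \<i>) ** X"
  have ctXe: "cnj (X $ j $ i) = - X $ i $ j" for i j
  proof -
    have "conj_transpose X $ i $ j = (- X) $ i $ j" by (simp add: ctX)
    then show ?thesis by simp
  qed
  have hH: "conj_transpose H = H"
    unfolding H_def mat_mult_left by (simp add: vec_eq_iff ctXe)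
  have c0: "conj_transpose (0::complex^'n^'n) = 0" by (simp add: vec_eq_iff)
  have comm0: "H ** 0 = 0 ** H" by simp
  obtain U a b where U: "conj_transpose U ** U = mat 1" "U ** conj_transpose U = mat 1"
    and Ha: "H = U ** Dg (\<lambda>i. complex_of_real (a i)) ** conj_transpose U"
    using spectral_pair[OF hH c0 comm0] by auto
  have uU: "unitary U" using U unitary_def by blast
  have "X = mat \<i> ** H" unfolding H_def by (simp add: vec_eq_iff mat_mult_left)
  also have "\<dots> = U ** Dg (\<lambda>j. \<i> * complex_of_real (a j)) ** conj_transpose U"
    unfolding Ha by (simp add: h1 h2)
  finally have Xa: "X = U ** Dg (\<lambda>j. \<i> * complex_of_real (a j)) ** conj_transpose U" .
  have "\<i> * complex_of_real (\<Sum>j\<in>UNIV. a j) = 0"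
    using trX uU unfolding Xa by (simp add: h7 trace_Dg of_real_sum sum_distrib_left)
  then have "(\<Sum>j\<in>UNIV. a j) = 0" by (simp only: mult_eq_0_iff complex_i_not_zero of_real_eq_0_iff simp_thms)
  then show ?thesis using uU Xa by blast
qed


lemma matrix_sub_ldistrib': "(A::complex^'n^'m) ** (B - C) = A ** B - A ** C"
  by (simp add: vec_eq_iff matrix_matrix_mult_def right_diff_distrib sum_subtractf)

lemma matrix_sub_rdistrib': "((B::complex^'n^'m) - C) ** A = B ** A - C ** A"
  by (simp add: vec_eq_iff matrix_matrix_mult_def left_diff_distrib sum_subtractf)

lemma mat_mat: "mat a ** mat b = (mat (a * b) :: complex^'n^'n)"
  unfolding mat_mult_left by (simp add: vec_eq_iff mat_def)

lemma ms: fixes A B :: "complex^'n^'n"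
  shows "(mat a ** A) ** (mat b ** B) = mat (a * b) ** (A ** B)"
proof -
  have "(mat a ** A) ** (mat b ** B) = mat a ** (A ** mat b) ** B" by (simp only: matrix_mul_assoc)
  also have "A ** mat b = mat b ** A" by (rule mat_comm[symmetric])
  also have "mat a ** (mat b ** A) ** B = (mat a ** mat b) ** (A ** B)" by (simp only: matrix_mul_assoc)
  finally show ?thesis by (simp add: mat_mat)
qed

lemma aux1: "cnj (1 / 2 * (a + cnj b)) = 1 / 2 * (b + cnj (a::complex))"
  by (simp add: add.commute)
lemma aux2: "cnj (- \<i> / 2 * (a - cnj b)) = - \<i> / 2 * (b - cnj (a::complex))"
  by (simp add: field_simps)

lemma unitary_ct: "unitary U \<Longrightarrow> unitary (conj_transpose U)"
  by (simp add: unitary_def)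

lemma unit_diag:
  fixes Q :: "complex^'n^'n"
  assumes "Q \<in> SU"
  shows "\<exists>U d. unitary U \<and> Q = U ** Dg d ** conj_transpose U \<and> (\<forall>j. cmod (d j) = 1) \<and> (\<Prod>j\<in>UNIV. d j) = 1"
proof -
  have QQ: "Q ** conj_transpose Q = mat 1" and dQ: "det Q = 1" using assms by (auto simp: SU_def)
  have QQ': "conj_transpose Q ** Q = mat 1" using QQ matrix_left_right_inverse by blast
  define H1 where "H1 = mat (1/2) ** (Q + conj_transpose Q)"
  define H2 where "H2 = mat (- \<i>/2) ** (Q - conj_transpose Q)"
  have hH1: "conj_transpose H1 = H1"
    unfolding H1_def mat_mult_left by (simp only: vec_eq_iff ct_nth vec_lambda_beta vector_add_component aux1 simp_thms allI)
  have hH2: "conj_transpose H2 = H2"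
    unfolding H2_def mat_mult_left by (simp only: vec_eq_iff ct_nth vec_lambda_beta vector_minus_component aux2 simp_thms allI)
  have "(Q + conj_transpose Q) ** (Q - conj_transpose Q) = (Q - conj_transpose Q) ** (Q + conj_transpose Q)"
    by (simp add: matrix_add_ldistrib matrix_add_rdistrib' matrix_sub_ldistrib' matrix_sub_rdistrib' QQ QQ')
  then have comm: "H1 ** H2 = H2 ** H1" unfolding H1_def H2_def by (simp add: ms mult.commute)
  obtain U a b where U: "conj_transpose U ** U = mat 1" "U ** conj_transpose U = mat 1"
    and Ha: "H1 = U ** Dg (\<lambda>i. complex_of_real (a i)) ** conj_transpose U"
    and Hb: "H2 = U ** Dg (\<lambda>i. complex_of_real (b i)) ** conj_transpose U"
    using spectral_pair[OF hH1 hH2 comm] by blast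
  have uU: "unitary U" using U unitary_def by blast
  have "Q = H1 + mat \<i> ** H2"
    unfolding H1_def H2_def mat_mult_left by (simp add: vec_eq_iff field_simps)
  also have "\<dots> = U ** Dg (\<lambda>j. complex_of_real (a j) + \<i> * complex_of_real (b j)) ** conj_transpose U"
    unfolding Ha Hb by (simp add: h1 h2 h3 h4)
  finally have Qd: "Q = U ** Dg (\<lambda>j. complex_of_real (a j) + \<i> * complex_of_real (b j)) ** conj_transpose U" .
  define d where "d j = complex_of_real (a j) + \<i> * complex_of_real (b j)" for j
  have Qd': "Q = U ** Dg d ** conj_transpose U" using Qd by (simp add: d_def[abs_def])
  have e1: "U ** (Dg d ** conj_transpose (Dg d)) ** conj_transpose U = mat 1"
    using QQ uU unfolding Qd' by (simp add: h8 h11)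
  have "Dg d ** conj_transpose (Dg d) = conj_transpose U ** (U ** (Dg d ** conj_transpose (Dg d)) ** conj_transpose U) ** U"
    using h5[OF uU] by simp
  also have "\<dots> = mat 1" unfolding e1 using U by simp
  finally have "Dg d ** conj_transpose (Dg d) = mat 1" .
  then have "Dg (\<lambda>j. d j * cnj (d j)) = mat 1" by (simp add: ct_Dg Dg_mult)
  then have "d j * cnj (d j) = 1" for j by (rule h10)
  then have "complex_of_real ((cmod (d j))^2) = 1" for j by (simp only: complex_norm_square)
  then have sq1: "(cmod (d j))^2 = 1" for j by (simp only: of_real_eq_1_iff)
  have dn: "cmod (d j) = 1" for j
  proof -
    have "cmod (d j) = 1 \<or> cmod (d j) = -1" using sq1[of j] power2_eq_1_iff by blast
    moreover have "cmod (d j) \<ge> 0" by simp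
    ultimately show ?thesis by linarith
  qed
  have "Dg d = conj_transpose U ** Q ** U" using h5[OF uU] Qd' by simp
  then have "(\<Prod>j\<in>UNIV. d j) = det (conj_transpose U) * det Q * det U" by (simp add: det_Dg[symmetric] det_mul)
  also have "\<dots> = det (conj_transpose U ** U) * det Q" by (simp add: det_mul)
  also have "\<dots> = 1" using U dQ by simp
  finally show ?thesis using uU Qd' dn by blast
qed


definition dlt :: "nat \<Rightarrow> real" where
  "dlt n = (if even n then real n * pi^2 else (real n - 1 / real n) * pi^2)"

definition Cs :: "nat \<Rightarrow> real set" where
  "Cs n = (if even n then {0} else {pi / real n, - (pi / real n)})"

definition kk :: "real \<Rightarrow> complex" where
  "kk c = - exp (- \<i> * complex_of_real c)"

lemma exp_neg_pi_i: "exp (- (complex_of_real pi * \<i>)) = -1"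
  by (simp add: exp_minus)

lemma kap_eq: assumes "n > 0"
  shows "exp (complex_of_real ((real n - 1) * pi / real n) * \<i>) = kk (pi / real n)"
proof -
  have "complex_of_real ((real n - 1) * pi / real n) * \<i> = complex_of_real pi * \<i> + (- \<i> * complex_of_real (pi / real n))"
    using assms by (simp add: field_simps)
  note eqn = this
  show ?thesis unfolding kk_def eqn exp_add exp_pi_i by simp
qed

lemma kam_eq: assumes "n > 0"
  shows "exp (- complex_of_real ((real n - 1) * pi / real n) * \<i>) = kk (- (pi / real n))"
proof -
  have "- complex_of_real ((real n - 1) * pi / real n) * \<i> = - (complex_of_real pi * \<i>) + (- \<i> * complex_of_real (- (pi / real n)))"
    using assms by (simp add: field_simps)
  note eqn = this
  show ?thesis unfolding kk_def eqn exp_add exp_neg_pi_i by simp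
qed

lemma neg_mat1: "- mat 1 = (mat (-1) :: complex^'n^'n)"
  by (simp add: vec_eq_iff mat_def)

lemma special_iff:
  "(if even CARD('n) then Q = - mat 1
    else Q = mat (exp (complex_of_real ((real CARD('n) - 1) * pi / real CARD('n)) * \<i>))
       \<or> Q = mat (exp (- complex_of_real ((real CARD('n) - 1) * pi / real CARD('n)) * \<i>)))
   \<longleftrightarrow> (\<exists>c\<in>Cs CARD('n). Q = (mat (kk c) :: complex^'n^'n))"
proof -
  have n0: "CARD('n) > 0" by simp
  show ?thesis
    using kap_eq[OF n0] kam_eq[OF n0] by (auto simp: Cs_def kk_def neg_mat1)
qed

lemma Cs_dlt: assumes "c \<in> Cs n" "n > 0"
  shows "real n * pi^2 - real n * c^2 = dlt n"
proof (cases "even n")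
  case True then show ?thesis using assms by (simp add: Cs_def dlt_def)
next
  case False
  then have "c^2 = (pi / real n)^2" using assms by (auto simp: Cs_def)
  then have "real n * c^2 = pi^2 / real n" using assms by (simp add: power2_eq_square field_simps)
  then show ?thesis using False assms by (simp add: dlt_def field_simps)
qed

lemma kk_sq: "kk c * cnj (kk c) = 1"
  by (simp add: kk_def exp_cnj exp_add[symmetric])

lemma kk_pow: assumes "c \<in> Cs n" "n > 0" shows "kk c ^ n = 1"
proof -
  have "kk c ^ n = (-1)^n * exp (- \<i> * complex_of_real c) ^ n"
    unfolding kk_def by (rule power_minus)
  also have "exp (- \<i> * complex_of_real c) ^ n = exp (of_nat n * (- \<i> * complex_of_real c))"
    by (rule exp_of_nat_mult[symmetric])
  finally have "kk c ^ n = (-1)^n * exp (of_nat n * (- \<i> * complex_of_real c))" .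
  moreover have "even n \<Longrightarrow> c = 0" using assms by (simp add: Cs_def)
  moreover have "odd n \<Longrightarrow> exp (of_nat n * (- \<i> * complex_of_real c)) = -1"
  proof -
    assume o: "odd n"
    then have "c = pi / real n \<or> c = - (pi / real n)" using assms by (simp add: Cs_def)
    then show ?thesis
    proof
      assume "c = pi / real n"
      then have "real n * c = pi" using assms by simp
      then have nc: "complex_of_nat n * complex_of_real c = complex_of_real pi" by (metis of_real_mult of_real_of_nat_eq)
      have "of_nat n * (- \<i> * complex_of_real c) = - \<i> * (complex_of_nat n * complex_of_real c)"
        by (simp add: algebra_simps)
      then have e1: "of_nat n * (- \<i> * complex_of_real c) = - (complex_of_real pi * \<i>)"
        unfolding nc by simp
      show ?thesis by (subst e1) (rule exp_neg_pi_i)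
    next
      assume "c = - (pi / real n)"
      then have "real n * c = - pi" using assms by simp
      then have nc: "complex_of_nat n * complex_of_real c = - complex_of_real pi" by (metis of_real_mult of_real_of_nat_eq of_real_minus)
      have "of_nat n * (- \<i> * complex_of_real c) = - \<i> * (complex_of_nat n * complex_of_real c)"
        by (simp add: algebra_simps)
      then have "of_nat n * (- \<i> * complex_of_real c) = complex_of_real pi * \<i>"
        unfolding nc by simp
      then show ?thesis by simp
    qed
  qed
  ultimately show ?thesis by (cases "even n") auto
qed

lemma kk_SU: assumes "c \<in> Cs CARD('n)" shows "(mat (kk c) :: complex^'n^'n) \<in> SU"
proof -
  have "(mat (kk c) :: complex^'n^'n) ** conj_transpose (mat (kk c)) = mat 1"
    by (simp add: mat_mat kk_sq)
  moreover have "det (mat (kk c) :: complex^'n^'n) = 1"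
    using kk_pow[OF assms] by (simp add: Dg_const[symmetric] det_Dg)
  ultimately show ?thesis by (simp add: SU_def)
qed

lemma LB_main:
  fixes X :: "complex^'n^'n"
  assumes X: "X \<in> su" and e: "cmat_exp X = mat (kk c)"
  shows "real CARD('n) * pi^2 - real CARD('n) * c^2 \<le> (frob_norm X)^2"
proof -
  obtain U \<theta> where U: "unitary U" and Xe: "X = U ** Dg (\<lambda>j. \<i> * complex_of_real (\<theta> j)) ** conj_transpose U"
    and s: "(\<Sum>j\<in>UNIV. \<theta> j) = 0"
    using log_diag[OF X] by blast
  have U1: "conj_transpose U ** U = mat 1" "U ** conj_transpose U = mat 1" using U unitary_def by auto
  have "U ** Dg (\<lambda>j. exp (\<i> * complex_of_real (\<theta> j))) ** conj_transpose U = mat (kk c)"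
    using e unfolding Xe cmat_exp_conj_Dg[OF U1] .
  then have "conj_transpose U ** (U ** Dg (\<lambda>j. exp (\<i> * complex_of_real (\<theta> j))) ** conj_transpose U) ** U
      = conj_transpose U ** mat (kk c) ** conj_transpose (conj_transpose U)" by simp
  then have "Dg (\<lambda>j. exp (\<i> * complex_of_real (\<theta> j))) = mat (kk c)"
    unfolding h5[OF U] h6[OF unitary_ct[OF U]] .
  then have ej: "exp (\<i> * complex_of_real (\<theta> j)) = kk c" for j by (rule h10)
  have "pi^2 \<le> (\<theta> j + c)^2" for j
  proof (rule neg1_sq)
    have "exp (\<i> * complex_of_real (\<theta> j + c)) = exp (\<i> * complex_of_real (\<theta> j)) * exp (\<i> * complex_of_real c)"
      by (simp add: exp_add[symmetric] algebra_simps)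
    also have "\<dots> = -1" unfolding ej by (simp add: kk_def exp_add[symmetric])
    finally show "exp (\<i> * complex_of_real (\<theta> j + c)) = -1" .
  qed
  then have "real CARD('n) * pi^2 - real CARD('n) * c^2 \<le> (\<Sum>j\<in>UNIV. (\<theta> j)^2)"
    using LB_sum s by blast
  then show ?thesis unfolding Xe frob_conj[OF U] .
qed

lemma UB_main:
  fixes Q :: "complex^'n^'n"
  assumes n2: "CARD('n) \<ge> 2" and Q: "Q \<in> SU"
  shows "\<exists>X\<in>su. cmat_exp X = Q \<and> (frob_norm X)^2 \<le> dlt CARD('n) \<and>
     ((frob_norm X)^2 = dlt CARD('n) \<longrightarrow> (\<exists>c\<in>Cs CARD('n). Q = mat (kk c)))"
proof -
  obtain U d where U: "unitary U" and Qd: "Q = U ** Dg d ** conj_transpose U"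
    and dn: "\<And>j. cmod (d j) = 1" and dp: "(\<Prod>j\<in>UNIV. d j) = 1"
    using unit_diag[OF Q] by blast
  have U1: "conj_transpose U ** U = mat 1" "U ** conj_transpose U = mat 1" using U unitary_def by auto
  obtain \<theta> where th: "\<And>j. exp (\<i> * complex_of_real (\<theta> j)) = d j" and s: "(\<Sum>j\<in>UNIV. \<theta> j) = 0"
    and dd: "\<And>i j. \<theta> i - \<theta> j \<le> 2 * pi"
    using lift_exists[of d, OF dn dp] by blast
  define X where "X = U ** Dg (\<lambda>j. \<i> * complex_of_real (\<theta> j)) ** conj_transpose U"
  have Xsu: "X \<in> su" unfolding X_def by (rule su_conj[OF U s])
  have dfun: "(\<lambda>j. exp (\<i> * complex_of_real (\<theta> j))) = d" using th by (simp add: fun_eq_iff)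
  have Xe: "cmat_exp X = Q" unfolding X_def cmat_exp_conj_Dg[OF U1] dfun Qd ..
  have fX: "(frob_norm X)^2 = (\<Sum>j\<in>UNIV. (\<theta> j)^2)" unfolding X_def by (rule frob_conj[OF U])
  note R = UB_real[OF n2 s dd]
  have n0: "CARD('n) > 0" by simp
  have spec: "Q = mat (kk c)" if "c \<in> Cs CARD('n)" "\<forall>j. (\<theta> j + c)^2 = pi^2" for c
  proof -
    have "d j = kk c" for j using sq_pi_exp[of "\<theta> j" c] that(2) th[of j] by (simp add: kk_def)
    then have "d = (\<lambda>_. kk c)" by (simp add: fun_eq_iff)
    then show ?thesis unfolding Qd by (simp add: Dg_const h6[OF U])
  qed
  show ?thesis
  proof (intro bexI[of _ X] conjI impI)
    show "X \<in> su" by (rule Xsu)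
    show "cmat_exp X = Q" by (rule Xe)
    show "(frob_norm X)^2 \<le> dlt CARD('n)" using R unfolding fX dlt_def by auto
    assume eq: "(frob_norm X)^2 = dlt CARD('n)"
    show "\<exists>c\<in>Cs CARD('n). Q = mat (kk c)"
    proof (cases "even CARD('n)")
      case True
      then have "\<forall>j. (\<theta> j + 0)^2 = pi^2" using R eq unfolding fX dlt_def by auto
      moreover have "0 \<in> Cs CARD('n)" using True by (simp add: Cs_def)
      ultimately show ?thesis using spec by blast
    next
      case False
      then have "(\<forall>j. (\<theta> j + pi / real CARD('n))^2 = pi^2) \<or> (\<forall>j. (\<theta> j + - (pi / real CARD('n)))^2 = pi^2)"
        using R eq unfolding fX dlt_def by auto
      moreover have "pi / real CARD('n) \<in> Cs CARD('n)" "- (pi / real CARD('n)) \<in> Cs CARD('n)"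
        using False by (auto simp: Cs_def)
      ultimately show ?thesis using spec by blast
    qed
  qed
qed


theorem proposition4p1:
  assumes "CARD('n::finite) \<ge> 2"
  shows "(even CARD('n) \<longrightarrow> delta_SU TYPE('n) = real CARD('n) * pi^2)
       \<and> (odd CARD('n) \<longrightarrow> delta_SU TYPE('n) = (real CARD('n) - 1 / real CARD('n)) * pi^2)
       \<and> (\<forall>Q :: complex^'n^'n. Q \<in> SU \<longrightarrow>
            (m_SU Q = delta_SU TYPE('n) \<longleftrightarrow>
              (if even CARD('n) then Q = - mat 1
               else Q = mat (exp (complex_of_real ((real CARD('n) - 1) * pi / real CARD('n)) * \<i>))
                  \<or> Q = mat (exp (- complex_of_real ((real CARD('n) - 1) * pi / real CARD('n)) * \<i>)))))"
proof -
  define L where "L Q = {(frob_norm X)^2 | X. X \<in> su \<and> cmat_exp X = Q}" for Q :: "complex^'n^'n"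
  have mdef: "m_SU Q = Inf (L Q)" for Q unfolding m_SU_def L_def ..
  have bdd: "bdd_below (L Q)" for Q unfolding L_def by (intro bdd_belowI[of _ 0]) auto
  have mle: "m_SU Q \<le> dlt CARD('n) \<and> ((\<not> (\<exists>c\<in>Cs CARD('n). Q = mat (kk c))) \<longrightarrow> m_SU Q < dlt CARD('n)) \<and> L Q \<noteq> {}"
    if Q: "Q \<in> SU" for Q
  proof -
    obtain X where X: "X \<in> su" "cmat_exp X = Q" and f1: "(frob_norm X)^2 \<le> dlt CARD('n)"
      and f2: "(frob_norm X)^2 = dlt CARD('n) \<longrightarrow> (\<exists>c\<in>Cs CARD('n). Q = mat (kk c))"
      using UB_main[OF assms Q] by blast
    have inL: "(frob_norm X)^2 \<in> L Q" unfolding L_def using X by blast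
    then have "m_SU Q \<le> (frob_norm X)^2" unfolding mdef by (rule cInf_lower[OF _ bdd])
    then show ?thesis using f1 f2 inL by auto
  qed
  have mspec: "m_SU (mat (kk c) :: complex^'n^'n) = dlt CARD('n)" if c: "c \<in> Cs CARD('n)" for c
  proof -
    have Q: "(mat (kk c) :: complex^'n^'n) \<in> SU" by (rule kk_SU[OF c])
    have "dlt CARD('n) \<le> m_SU (mat (kk c) :: complex^'n^'n)"
      unfolding mdef
    proof (rule cInf_greatest)
      show "L (mat (kk c)) \<noteq> {}" using mle[OF Q] by blast
      fix x assume "x \<in> L (mat (kk c))"
      then obtain X :: "complex^'n^'n" where X: "X \<in> su" "cmat_exp X = mat (kk c)" and x: "x = (frob_norm X)^2"
        unfolding L_def by blast
      have "real CARD('n) * pi^2 - real CARD('n) * c^2 \<le> (frob_norm X)^2" by (rule LB_main[OF X])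
      then show "dlt CARD('n) \<le> x" using Cs_dlt[OF c] x by simp
    qed
    then show ?thesis using mle[OF Q] by simp
  qed
  define c0 where "c0 = (if even CARD('n) then 0 else pi / real CARD('n))"
  have c0: "c0 \<in> Cs CARD('n)" by (simp add: c0_def Cs_def)
  have delta: "delta_SU TYPE('n) = dlt CARD('n)"
    unfolding delta_SU_def
  proof (rule cSup_eq_maximum)
    show "dlt CARD('n) \<in> {m_SU Q |Q :: complex^'n^'n. Q \<in> SU}"
      using mspec[OF c0] kk_SU[OF c0] by force
    fix x assume "x \<in> {m_SU Q |Q :: complex^'n^'n. Q \<in> SU}"
    then show "x \<le> dlt CARD('n)" using mle by blast
  qed
  have iff: "m_SU Q = delta_SU TYPE('n) \<longleftrightarrow> (\<exists>c\<in>Cs CARD('n). Q = mat (kk c))" if Q: "Q \<in> SU" for Q :: "complex^'n^'n"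
    using mle[OF Q] mspec unfolding delta by force
  show ?thesis
  proof (intro conjI allI impI)
    assume "even CARD('n)"
    then show "delta_SU TYPE('n) = real CARD('n) * pi^2" using delta by (simp add: dlt_def)
  next
    assume "odd CARD('n)"
    then show "delta_SU TYPE('n) = (real CARD('n) - 1 / real CARD('n)) * pi^2" using delta by (simp add: dlt_def)
  next
    fix Q :: "complex^'n^'n" assume Q: "Q \<in> SU"
    show "m_SU Q = delta_SU TYPE('n) \<longleftrightarrow>
              (if even CARD('n) then Q = - mat 1
               else Q = mat (exp (complex_of_real ((real CARD('n) - 1) * pi / real CARD('n)) * \<i>))
                  \<or> Q = mat (exp (- complex_of_real ((real CARD('n) - 1) * pi / real CARD('n)) * \<i>)))"
      unfolding special_iff by (rule iff[OF Q])
  qed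
qed


end
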